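(* Let $\Lambda\subset\mathbb{R}^d$ be a $d$-dimensional lattice and let $V_\Lambda=\{x\in\mathbb{R}^d: |x|\le|x-a|\ \forall a\in\Lambda\}$ be its Voronoi cell. Then $V_\Lambda$ is lattice complete with respect to $\Lambda$ and its polar body $(V_\Lambda)^\star=\{y: x\cdot y\le 1\ \forall x\in V_\Lambda\}$ is lattice reduced with respect to $\Lambda^\star$.
   Context: A lattice $\Lambda\subset\mathbb{R}^d$ is a discrete subgroup spanning $\mathbb{R}^d$; $\Lambda^\star=\{y: x\cdot y\in\mathbb{Z}\ \forall x\in\Lambda\}$. For a convex body $K$ (compact convex, non-empty interior) and lattice $\Gamma$: $\mathrm{wdt}_\Gamma(K)=\min_{y\in\Gamma^\star\setminus\{0\}}\max_{a,b\in K}y\cdot(a-b)$; a segment $[a,b]$ is a lattice segment if $b-a$ is parallel to a nonzero vector of $\Gamma$, with lattice length $|b-a|/|v|$ where $v$ generates $\Gamma\cap\mathrm{span}\{b-a\}$ and is a positive multiple of $b-a$; $\mathrm{diam}_\Gamma(K)$ is the maximal lattice length of a lattice segment in $K$. $K$ is lattice reduced w.r.t. $\Gamma$ if no convex body $K'\subsetneq K$ has the same lattice width; lattice complete if no convex body $K'\supsetneq K$ has the same lattice diameter. *)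

theory Defs
  imports "HOL-Analysis.Analysis"
begin

definition is_lattice :: "'a::euclidean_space set \<Rightarrow> bool" where
  "is_lattice L \<longleftrightarrow> 0 \<in> L \<and> (\<forall>x\<in>L. \<forall>y\<in>L. x + y \<in> L) \<and> (\<forall>x\<in>L. - x \<in> L)
     \<and> discrete L \<and> span L = UNIV"

definition dual_lattice :: "'a::euclidean_space set \<Rightarrow> 'a set" where
  "dual_lattice L = {y. \<forall>x\<in>L. x \<bullet> y \<in> \<int>}"

definition convex_body :: "'a::euclidean_space set \<Rightarrow> bool" where
  "convex_body K \<longleftrightarrow> compact K \<and> convex K \<and> interior K \<noteq> {}"

definition lattice_width :: "'a::euclidean_space set \<Rightarrow> 'a set \<Rightarrow> real" where
  "lattice_width G K =
     (INF y \<in> dual_lattice G - {0}. SUP p \<in> K \<times> K. y \<bullet> (fst p - snd p))"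

definition lattice_segment :: "'a::euclidean_space set \<Rightarrow> 'a \<Rightarrow> 'a \<Rightarrow> bool" where
  "lattice_segment G a b \<longleftrightarrow> (\<exists>v\<in>G. v \<noteq> 0 \<and> (\<exists>t::real. b - a = t *\<^sub>R v))"

text \<open>Lattice length |b-a|/|v|, v the primitive lattice vector in direction b-a
  (equivalently the nonzero lattice vector of least norm on the line through 0 and b-a).\<close>
definition lattice_length :: "'a::euclidean_space set \<Rightarrow> 'a \<Rightarrow> 'a \<Rightarrow> real" where
  "lattice_length G a b =
     norm (b - a) / Inf {norm v | v. v \<in> G \<and> v \<noteq> 0 \<and> (\<exists>t::real. v = t *\<^sub>R (b - a))}"

definition lattice_diameter :: "'a::euclidean_space set \<Rightarrow> 'a set \<Rightarrow> real" where
  "lattice_diameter G K =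
     Sup {lattice_length G a b | a b. a \<in> K \<and> b \<in> K \<and> lattice_segment G a b}"

definition lattice_reduced :: "'a::euclidean_space set \<Rightarrow> 'a set \<Rightarrow> bool" where
  "lattice_reduced G K \<longleftrightarrow> convex_body K \<and>
     \<not> (\<exists>K'. convex_body K' \<and> K' \<subset> K \<and> lattice_width G K' = lattice_width G K)"

definition lattice_complete :: "'a::euclidean_space set \<Rightarrow> 'a set \<Rightarrow> bool" where
  "lattice_complete G K \<longleftrightarrow> convex_body K \<and>
     \<not> (\<exists>K'. convex_body K' \<and> K \<subset> K' \<and> lattice_diameter G K' = lattice_diameter G K)"

definition voronoi_cell :: "'a::euclidean_space set \<Rightarrow> 'a set" where
  "voronoi_cell L = {x. \<forall>a\<in>L. norm x \<le> norm (x - a)}"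

definition polar_body :: "'a::euclidean_space set \<Rightarrow> 'a set" where
  "polar_body K = {y. \<forall>x\<in>K. x \<bullet> y \<le> 1}"

end

theory Submission
  imports Defs "HOL-Analysis.Analysis"
begin

locale lat = fixes L :: "'a::euclidean_space set" assumes lat: "is_lattice L"
begin

lemma zero[simp]: "0 \<in> L" using lat unfolding is_lattice_def by auto
lemma add: "x \<in> L \<Longrightarrow> y \<in> L \<Longrightarrow> x + y \<in> L" using lat unfolding is_lattice_def by auto
lemma neg: "x \<in> L \<Longrightarrow> - x \<in> L" using lat unfolding is_lattice_def by auto
lemma diff: "x \<in> L \<Longrightarrow> y \<in> L \<Longrightarrow> x - y \<in> L" using add[of x "-y"] neg[of y] by simp
lemma spanL: "span L = UNIV" using lat unfolding is_lattice_def by auto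

lemma nat_mult: "x \<in> L \<Longrightarrow> of_nat n *\<^sub>R x \<in> L"
  by (induction n) (auto simp: algebra_simps intro: add)

lemma int_mult: "x \<in> L \<Longrightarrow> of_int k *\<^sub>R x \<in> L"
proof (cases "k \<ge> 0")
  case True
  assume "x \<in> L"
  then show ?thesis using nat_mult[of x "nat k"] True by simp
next
  case False
  assume "x \<in> L"
  then have "of_nat (nat (-k)) *\<^sub>R x \<in> L" by (rule nat_mult)
  then have "- (of_nat (nat (-k)) *\<^sub>R x) \<in> L" by (rule neg)
  then show ?thesis using False by simp
qed

lemma sum_int: "finite G \<Longrightarrow> G \<subseteq> L \<Longrightarrow> (\<Sum>g\<in>G. of_int (m g) *\<^sub>R g) \<in> L"
  by (induction G rule: finite_induct) (auto intro: add int_mult)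

lemma sep: "\<exists>e>0. \<forall>x\<in>L. x \<noteq> 0 \<longrightarrow> e \<le> norm x"
proof -
  have "discrete L" using lat unfolding is_lattice_def by auto
  then have "0 isolated_in L" by (auto simp: discrete_def)
  then obtain d where d: "d > 0" "\<And>y. y \<in> L \<Longrightarrow> dist 0 y < d \<Longrightarrow> y = 0"
    using isolated_inE_dist[OF \<open>0 isolated_in L\<close>] by metis
  show ?thesis
    by (rule exI[of _ d]) (use d in \<open>force simp: not_less[symmetric]\<close>)
qed

lemma unif: "uniform_discrete L"
proof -
  obtain e where e: "e > 0" "\<forall>x\<in>L. x \<noteq> 0 \<longrightarrow> e \<le> norm x" using sep by blast
  show ?thesis
  proof (rule uniformI2[OF e(1)])
    fix x y assume "x \<in> L" "y \<in> L" "x \<noteq> y"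
    then show "e \<le> dist x y" using e(2) diff[of x y] by (auto simp: dist_norm)
  qed
qed

lemma closedL: "closed L" using unif uniform_discrete_imp_closed by blast

lemma finite_bounded: "bounded S \<Longrightarrow> finite (L \<inter> S)"
  using uniform_discrete_finite_iff[of "L \<inter> S"] unif
  by (meson bounded_subset inf_le1 inf_le2 uniform_discrete_subset)

lemma nonzero: "\<exists>a\<in>L. a \<noteq> 0"
proof (rule ccontr)
  assume "\<not> ?thesis"
  then have "L \<subseteq> {0}" by auto
  then have "span L \<subseteq> {0}" using span_mono[of L "{0}"] by simp
  moreover obtain b :: 'a where "b \<in> Basis" using nonempty_Basis by blast
  ultimately show False using spanL by (auto simp: nonzero_Basis)
qed

end

context lat begin

lemma zbasis:
  "finite B \<Longrightarrow> independent B \<Longrightarrow> B \<subseteq> L \<Longrightarrow>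
   \<exists>G. finite G \<and> G \<subseteq> L \<and> independent G \<and> span G = span B \<and>
       (\<forall>x\<in>L \<inter> span B. \<exists>m. x = (\<Sum>g\<in>G. of_int (m g) *\<^sub>R g))"
proof (induction B rule: finite_induct)
  case empty
  show ?case by (rule exI[of _ "{}"]) (auto simp: independent_empty)
next
  case (insert b B0)
  have indB0: "independent B0" and bnot: "b \<notin> span B0"
    using insert.prems(1) insert.hyps(2) by (auto simp: independent_insert)
  obtain G0 where G0: "finite G0" "G0 \<subseteq> L" "independent G0" "span G0 = span B0"
     "\<forall>x\<in>L \<inter> span B0. \<exists>m. x = (\<Sum>g\<in>G0. of_int (m g) *\<^sub>R g)"
    using insert.IH[OF indB0] insert.prems(2) by auto
  have bL: "b \<in> L" using insert.prems(2) by auto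
  have uniq: "k = k'" if "x - k *\<^sub>R b \<in> span B0" "x - k' *\<^sub>R b \<in> span B0" for x k k'
  proof (rule ccontr)
    assume "k \<noteq> k'"
    have "(x - k' *\<^sub>R b) - (x - k *\<^sub>R b) \<in> span B0" using that span_diff by blast
    then have "(k - k') *\<^sub>R b \<in> span B0" by (simp add: algebra_simps)
    then have "(1/(k - k')) *\<^sub>R ((k - k') *\<^sub>R b) \<in> span B0" using span_scale by blast
    then show False using \<open>k \<noteq> k'\<close> bnot by simp
  qed
  define S where "S = {k::real. \<exists>x\<in>L. x - k *\<^sub>R b \<in> span B0}"
  have oneS: "1 \<in> S" unfolding S_def using bL by (auto intro!: bexI[of _ b] simp: span_zero)
  define C where "C = norm b + (\<Sum>g\<in>G0. norm g)"
  have red: "\<exists>x\<in>L \<inter> cball 0 C. x - k *\<^sub>R b \<in> span B0" if kS: "k \<in> S" "0 < k" "k \<le> 1" for k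
  proof -
    obtain x where x: "x \<in> L" "x - k *\<^sub>R b \<in> span B0" using kS(1) unfolding S_def by auto
    then have "x - k *\<^sub>R b \<in> span G0" using G0(4) by simp
    then have "x - k *\<^sub>R b \<in> range (\<lambda>u. \<Sum>v\<in>G0. u v *\<^sub>R v)"
      using span_finite[OF G0(1)] by simp
    then obtain r where r: "x - k *\<^sub>R b = (\<Sum>g\<in>G0. r g *\<^sub>R g)"
      by (metis (no_types, lifting) imageE)
    define x' where "x' = x - (\<Sum>g\<in>G0. of_int (floor (r g)) *\<^sub>R g)"
    have x'L: "x' \<in> L" unfolding x'_def using diff[OF x(1) sum_int[OF G0(1) G0(2), of "\<lambda>g. floor (r g)"]] .
    have x'eq: "x' = k *\<^sub>R b + (\<Sum>g\<in>G0. (r g - of_int (floor (r g))) *\<^sub>R g)"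
    proof -
      have xe: "x = k *\<^sub>R b + (\<Sum>g\<in>G0. r g *\<^sub>R g)" by (metis r add.commute diff_add_cancel)
      have "(\<Sum>g\<in>G0. (r g - of_int (floor (r g))) *\<^sub>R g) = (\<Sum>g\<in>G0. r g *\<^sub>R g) - (\<Sum>g\<in>G0. of_int (floor (r g)) *\<^sub>R g)"
        by (simp add: scaleR_diff_left sum_subtractf)
      then show ?thesis unfolding x'_def by (subst xe) simp
    qed
    have "norm (\<Sum>g\<in>G0. (r g - of_int (floor (r g))) *\<^sub>R g) \<le> (\<Sum>g\<in>G0. norm ((r g - of_int (floor (r g))) *\<^sub>R g))"
      by (rule norm_sum)
    also have "\<dots> \<le> (\<Sum>g\<in>G0. norm g)"
    proof (rule sum_mono)
      fix g assume "g \<in> G0"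
      have "\<bar>r g - of_int (floor (r g))\<bar> \<le> 1"
      proof -
        have "of_int (floor (r g)) \<le> r g" by (rule of_int_floor_le)
        moreover have "r g < of_int (floor (r g)) + 1" by (rule real_of_int_floor_add_one_gt)
        ultimately show ?thesis by linarith
      qed
      then show "norm ((r g - of_int (floor (r g))) *\<^sub>R g) \<le> norm g"
        by (simp add: mult_left_le_one_le)
    qed
    finally have n1: "norm (\<Sum>g\<in>G0. (r g - of_int (floor (r g))) *\<^sub>R g) \<le> (\<Sum>g\<in>G0. norm g)" .
    have "norm (k *\<^sub>R b) \<le> norm b" using kS by (simp add: mult_left_le_one_le)
    moreover have "norm x' \<le> norm (k *\<^sub>R b) + norm (\<Sum>g\<in>G0. (r g - of_int (floor (r g))) *\<^sub>R g)"
      unfolding x'eq by (rule norm_triangle_ineq)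
    ultimately have "norm x' \<le> C" unfolding C_def using n1 by linarith
    moreover have "x' - k *\<^sub>R b \<in> span B0"
    proof -
      have "x' - k *\<^sub>R b = (\<Sum>g\<in>G0. (r g - of_int (floor (r g))) *\<^sub>R g)" using x'eq by simp
      also have "\<dots> \<in> span G0" by (intro span_sum span_scale span_base)
      finally show ?thesis using G0(4) by simp
    qed
    ultimately show ?thesis using x'L by auto
  qed
  have finS: "finite (S \<inter> {0<..1})"
  proof -
    have "\<forall>k\<in>S \<inter> {0<..1}. \<exists>x. x \<in> L \<inter> cball 0 C \<and> x - k *\<^sub>R b \<in> span B0"
    proof
      fix k assume "k \<in> S \<inter> {0<..1}"
      then show "\<exists>x. x \<in> L \<inter> cball 0 C \<and> x - k *\<^sub>R b \<in> span B0" using red[of k] by auto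
    qed
    from bchoice[OF this] obtain f where f: "\<forall>k\<in>S \<inter> {0<..1}. f k \<in> L \<inter> cball 0 C \<and> f k - k *\<^sub>R b \<in> span B0"
      by blast
    have "inj_on f (S \<inter> {0<..1})"
    proof (rule inj_onI)
      fix k k' assume kk: "k \<in> S \<inter> {0<..1}" "k' \<in> S \<inter> {0<..1}" "f k = f k'"
      have a: "f k - k *\<^sub>R b \<in> span B0" using f kk(1) by blast
      have "f k' - k' *\<^sub>R b \<in> span B0" using f kk(2) by blast
      then have c: "f k - k' *\<^sub>R b \<in> span B0" using kk(3) by simp
      show "k = k'" using uniq[OF a c] .
    qed
    moreover have "f ` (S \<inter> {0<..1}) \<subseteq> L \<inter> cball 0 C" using f by auto
    moreover have "finite (L \<inter> cball 0 C)" by (rule finite_bounded) simp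
    ultimately show ?thesis by (rule inj_on_finite)
  qed
  define \<delta> where "\<delta> = Min (S \<inter> {0<..1})"
  have ne: "S \<inter> {0<..1} \<noteq> {}" using oneS by auto
  have \<delta>in: "\<delta> \<in> S \<inter> {0<..1}" unfolding \<delta>_def using Min_in[OF finS ne] .
  have \<delta>min: "\<delta> \<le> k" if "k \<in> S" "0 < k" "k \<le> 1" for k
    unfolding \<delta>_def using Min_le[OF finS] that by auto
  obtain g where g: "g \<in> L" "g - \<delta> *\<^sub>R b \<in> span B0" using \<delta>in unfolding S_def by auto
  have \<delta>pos: "\<delta> > 0" "\<delta> \<le> 1" using \<delta>in by auto
  have gnot: "g \<notin> span B0"
  proof
    assume "g \<in> span B0"
    then have "g - (g - \<delta> *\<^sub>R b) \<in> span B0" using g(2) span_diff by blast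
    then have "(1/\<delta>) *\<^sub>R (\<delta> *\<^sub>R b) \<in> span B0" using span_scale by fastforce
    then show False using bnot \<delta>pos by simp
  qed
  have gG0: "g \<notin> G0" using gnot G0(4) span_base by blast
  have spaneq: "span (insert g G0) = span (insert b B0)"
    unfolding span_eq
  proof
    have "g \<in> span (insert b B0)" using g(2) span_breakdown_eq by blast
    moreover have "G0 \<subseteq> span (insert b B0)"
      using G0(4) span_mono[of B0 "insert b B0"] span_superset[of G0] by auto
    ultimately show "insert g G0 \<subseteq> span (insert b B0)" by auto
  next
    have sp: "span B0 \<subseteq> span (insert g G0)"
      using G0(4) span_mono[of G0 "insert g G0"] by auto
    have "g - \<delta> *\<^sub>R b \<in> span (insert g G0)" using g(2) sp by auto
    then have "g - (g - \<delta> *\<^sub>R b) \<in> span (insert g G0)"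
      using span_diff span_base[of g "insert g G0"] by blast
    then have "(1/\<delta>) *\<^sub>R (\<delta> *\<^sub>R b) \<in> span (insert g G0)" using span_scale by fastforce
    then have "b \<in> span (insert g G0)" using \<delta>pos by simp
    moreover have "B0 \<subseteq> span (insert g G0)" using sp span_superset[of B0] by auto
    ultimately show "insert b B0 \<subseteq> span (insert g G0)" by auto
  qed
  have indep: "independent (insert g G0)"
    using G0(3) G0(4) gnot by (simp add: independent_insertI)
  have repr: "\<exists>m. x = (\<Sum>h\<in>insert g G0. of_int (m h) *\<^sub>R h)" if x: "x \<in> L" "x \<in> span (insert b B0)" for x
  proof -
    obtain k where k: "x - k *\<^sub>R b \<in> span B0" using x(2) span_breakdown_eq by blast
    define n where "n = floor (k / \<delta>)"
    define x' where "x' = x - of_int n *\<^sub>R g"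
    have x'L: "x' \<in> L" unfolding x'_def using x(1) g(1) int_mult diff by blast
    have x'sp: "x' - (k - of_int n * \<delta>) *\<^sub>R b \<in> span B0"
    proof -
      have "x' - (k - of_int n * \<delta>) *\<^sub>R b = (x - k *\<^sub>R b) - of_int n *\<^sub>R (g - \<delta> *\<^sub>R b)"
        unfolding x'_def by (simp add: algebra_simps)
      also have "\<dots> \<in> span B0" by (rule span_diff[OF k span_scale[OF g(2)]])
      finally show ?thesis .
    qed
    have "of_int n \<le> k / \<delta>" unfolding n_def by (rule of_int_floor_le)
    then have lo: "0 \<le> k - of_int n * \<delta>" using \<delta>pos by (simp add: le_divide_eq)
    have "k / \<delta> < of_int n + 1" unfolding n_def by (rule real_of_int_floor_add_one_gt)
    then have "k < (of_int n + 1) * \<delta>" using \<delta>pos by (simp add: divide_less_eq)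
    then have hi: "k - of_int n * \<delta> < \<delta>" by (simp add: algebra_simps)
    have "k - of_int n * \<delta> = 0"
    proof (rule ccontr)
      assume "k - of_int n * \<delta> \<noteq> 0"
      then have "k - of_int n * \<delta> \<in> S" "0 < k - of_int n * \<delta>" "k - of_int n * \<delta> \<le> 1"
        using x'sp x'L lo hi \<delta>pos unfolding S_def by auto
      then show False using \<delta>min hi by fastforce
    qed
    then have "x' \<in> span B0" using x'sp by simp
    then obtain m where m: "x' = (\<Sum>h\<in>G0. of_int (m h) *\<^sub>R h)" using G0(5) x'L by auto
    have "(\<Sum>h\<in>insert g G0. of_int ((m(g := n)) h) *\<^sub>R h)
          = of_int n *\<^sub>R g + (\<Sum>h\<in>G0. of_int ((m(g := n)) h) *\<^sub>R h)"
      using G0(1) gG0 by simp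
    also have "(\<Sum>h\<in>G0. of_int ((m(g := n)) h) *\<^sub>R h) = (\<Sum>h\<in>G0. of_int (m h) *\<^sub>R h)"
      using gG0 by (intro sum.cong) auto
    also have "(\<Sum>h\<in>G0. of_int (m h) *\<^sub>R h) = x'" using m by simp
    also have "of_int n *\<^sub>R g + x' = x" unfolding x'_def by simp
    finally have "(\<Sum>h\<in>insert g G0. of_int ((m(g := n)) h) *\<^sub>R h) = x" .
    then show ?thesis by metis
  qed
  show ?case
    by (rule exI[of _ "insert g G0"]) (use G0 g spaneq indep repr in auto)
qed

end

lemma linear_inner_repr:
  fixes f :: "'a::euclidean_space \<Rightarrow> real"
  assumes "linear f"
  shows "f x = x \<bullet> (\<Sum>i\<in>Basis. f i *\<^sub>R i)"
proof -
  have "f x = f (\<Sum>i\<in>Basis. (x \<bullet> i) *\<^sub>R i)" by (simp add: euclidean_representation)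
  also have "\<dots> = (\<Sum>i\<in>Basis. (x \<bullet> i) * f i)"
    using assms by (simp add: linear_sum linear_scale)
  also have "\<dots> = x \<bullet> (\<Sum>i\<in>Basis. f i *\<^sub>R i)"
    by (simp add: inner_sum_right mult.commute)
  finally show ?thesis .
qed

lemma coeff_extract:
  fixes f :: "'a::euclidean_space \<Rightarrow> real"
  assumes "linear f" "finite G" "h \<in> G" "\<And>g. g \<in> G \<Longrightarrow> f g = (if g = h then 1 else 0)"
  shows "f (\<Sum>g\<in>G. c g *\<^sub>R g) = c h"
proof -
  have "f (\<Sum>g\<in>G. c g *\<^sub>R g) = (\<Sum>g\<in>G. c g * f g)"
    using assms(1) by (simp add: linear_sum linear_scale)
  also have "\<dots> = (\<Sum>g\<in>G. if g = h then c g else 0)"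
    using assms(4) by (intro sum.cong) auto
  also have "\<dots> = c h" using assms(2,3) by simp
  finally show ?thesis .
qed

context lat begin

lemma dual_dual: "dual_lattice (dual_lattice L) = L"
proof
  show "L \<subseteq> dual_lattice (dual_lattice L)"
    unfolding dual_lattice_def by (auto simp: inner_commute)
next
  obtain B where B: "B \<subseteq> L" "independent B" "L \<subseteq> span B"
    using maximal_independent_subset[of L] by blast
  have finB: "finite B" using B(2) by (rule finiteI_independent)
  have spB: "span B = UNIV"
    using span_mono[OF B(3)] spanL by (simp add: span_span top.extremum_unique)
  obtain G where G: "finite G" "G \<subseteq> L" "independent G" "span G = span B"
    "\<forall>x\<in>L \<inter> span B. \<exists>m. x = (\<Sum>g\<in>G. of_int (m g) *\<^sub>R g)"
    using zbasis[OF finB B(2) B(1)] by blast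
  have rep: "\<exists>m. x = (\<Sum>g\<in>G. of_int (m g) *\<^sub>R g)" if "x \<in> L" for x
    using G(5) that spB by auto
  have fh: "\<exists>f. linear f \<and> (\<forall>g\<in>G. f g = (if g = h then 1 else (0::real)))" for h
    using linear_independent_extend[OF G(3), of "\<lambda>g. if g = h then 1 else (0::real)"] by blast
  show "dual_lattice (dual_lattice L) \<subseteq> L"
  proof
    fix y assume y: "y \<in> dual_lattice (dual_lattice L)"
    have "y \<in> span G" using G(4) spB by simp
    then have "y \<in> range (\<lambda>u. \<Sum>v\<in>G. u v *\<^sub>R v)" using span_finite[OF G(1)] by simp
    then obtain r where r: "y = (\<Sum>g\<in>G. r g *\<^sub>R g)" by (metis (no_types, lifting) imageE)
    have rint: "r h \<in> \<int>" if hG: "h \<in> G" for h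
    proof -
      obtain f where f: "linear f" "\<forall>g\<in>G. f g = (if g = h then 1 else (0::real))"
        using fh[of h] by blast
      define w where "w = (\<Sum>i\<in>Basis. f i *\<^sub>R i)"
      have fw: "f x = x \<bullet> w" for x unfolding w_def by (rule linear_inner_repr[OF f(1)])
      have "w \<in> dual_lattice L"
        unfolding dual_lattice_def
      proof (safe)
        fix x assume "x \<in> L"
        then obtain m where m: "x = (\<Sum>g\<in>G. of_int (m g) *\<^sub>R g)" using rep by blast
        have "x \<bullet> w = f x" by (simp add: fw)
        also have "\<dots> = of_int (m h)" unfolding m
          by (rule coeff_extract[OF f(1) G(1) hG]) (use f(2) in auto)
        finally show "x \<bullet> w \<in> \<int>" by simp
      qed
      then have "w \<bullet> y \<in> \<int>" using y unfolding dual_lattice_def by blast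
      moreover have "w \<bullet> y = r h"
      proof -
        have "w \<bullet> y = f y" by (simp add: inner_commute fw)
        also have "f y = r h" unfolding r
          by (rule coeff_extract[OF f(1) G(1) hG]) (use f(2) in auto)
        finally show ?thesis .
      qed
      ultimately show ?thesis by simp
    qed
    have "y = (\<Sum>g\<in>G. of_int (floor (r g)) *\<^sub>R g)"
      unfolding r using rint by (intro sum.cong refl) (metis floor_of_int Ints_cases)
    also have "\<dots> \<in> L" using sum_int[OF G(1) G(2)] .
    finally show "y \<in> L" .
  qed
qed

end

context lat begin

abbreviation "VC \<equiv> voronoi_cell L"

lemma V_iff: "x \<in> VC \<longleftrightarrow> (\<forall>a\<in>L. 2 * (x \<bullet> a) \<le> a \<bullet> a)"
proof -
  have "norm x \<le> norm (x - a) \<longleftrightarrow> 2 * (x \<bullet> a) \<le> a \<bullet> a" for a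
    by (simp add: norm_le inner_diff_left inner_diff_right inner_commute)
  then show ?thesis unfolding voronoi_cell_def mem_Collect_eq by blast
qed

lemma V_le: "x \<in> VC \<Longrightarrow> a \<in> L \<Longrightarrow> 2 * (x \<bullet> a) \<le> a \<bullet> a"
  using V_iff by blast

lemma V_sym: assumes "x \<in> VC" shows "- x \<in> VC"
  unfolding V_iff
proof
  fix a assume "a \<in> L"
  then have "- a \<in> L" by (rule neg)
  from V_le[OF assms this] show "2 * (- x \<bullet> a) \<le> a \<bullet> a" by simp
qed

lemma zero_V: "0 \<in> VC" unfolding V_iff by simp

lemma V_eq: "VC = (\<Inter>a\<in>L. {x. (2 *\<^sub>R a) \<bullet> x \<le> a \<bullet> a})"
  by (auto simp: V_iff inner_commute)

lemma V_closed: "closed VC"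
  by (subst V_eq) (intro closed_INT ballI closed_halfspace_le)

lemma V_convex: "convex VC"
  by (subst V_eq) (intro convex_INT ballI convex_halfspace_le)

lemma V_ball: "\<exists>r>0. ball 0 r \<subseteq> VC"
proof -
  obtain e where e: "e > 0" "\<forall>x\<in>L. x \<noteq> 0 \<longrightarrow> e \<le> norm x" using sep by blast
  have "ball 0 (e/2) \<subseteq> VC"
  proof
    fix x :: 'a assume "x \<in> ball 0 (e/2)"
    then have nx: "norm x < e/2" by simp
    show "x \<in> VC" unfolding V_iff
    proof
      fix a assume a: "a \<in> L"
      show "2 * (x \<bullet> a) \<le> a \<bullet> a"
      proof (cases "a = 0")
        case True then show ?thesis by simp
      next
        case False
        then have ea: "e \<le> norm a" using e a by auto
        have "2 * (x \<bullet> a) \<le> 2 * (norm x * norm a)"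
          using Cauchy_Schwarz_ineq2[of x a] by (simp add: abs_le_iff)
        also have "\<dots> = (2 * norm x) * norm a" by simp
        also have "\<dots> \<le> e * norm a" using nx by (intro mult_right_mono) auto
        also have "\<dots> \<le> norm a * norm a" using ea by (simp add: mult_right_mono)
        also have "\<dots> = a \<bullet> a" by (simp add: dot_square_norm power2_eq_square)
        finally show ?thesis .
      qed
    qed
  qed
  then show ?thesis using e(1) by (intro exI[of _ "e/2"]) auto
qed

lemma V_bounded: "\<exists>R>0. VC \<subseteq> cball 0 R"
proof -
  obtain B where B: "B \<subseteq> L" "independent B" "L \<subseteq> span B"
    using maximal_independent_subset[of L] by blast
  have finB: "finite B" using B(2) by (rule finiteI_independent)
  have spB: "span B = UNIV"
    using span_mono[OF B(3)] spanL by (simp add: span_span top.extremum_unique)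
  have "\<forall>i\<in>Basis. \<exists>u. i = (\<Sum>b\<in>B. u b *\<^sub>R b)"
  proof
    fix i :: 'a
    have "i \<in> range (\<lambda>u. \<Sum>v\<in>B. u v *\<^sub>R v)" using span_finite[OF finB] spB by simp
    then show "\<exists>u. i = (\<Sum>b\<in>B. u b *\<^sub>R b)" by blast
  qed
  from bchoice[OF this] obtain u where u: "\<forall>i\<in>Basis. i = (\<Sum>b\<in>B. u i b *\<^sub>R b)" by blast
  define R where "R = 1 + (\<Sum>i\<in>Basis. \<Sum>b\<in>B. \<bar>u i b\<bar> * (b \<bullet> b))"
  have xb: "\<bar>x \<bullet> b\<bar> \<le> b \<bullet> b" if "x \<in> VC" "b \<in> B" for x b
  proof -
    have "b \<in> L" "- b \<in> L" using that B(1) neg by auto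
    then have "2 * (x \<bullet> b) \<le> b \<bullet> b" "2 * (x \<bullet> (-b)) \<le> (-b) \<bullet> (-b)"
      using V_le that(1) by blast+
    moreover have "0 \<le> b \<bullet> b" by simp
    ultimately show ?thesis by (simp add: abs_le_iff)
  qed
  have "VC \<subseteq> cball 0 R"
  proof
    fix x assume x: "x \<in> VC"
    have "norm x \<le> (\<Sum>i\<in>Basis. \<bar>x \<bullet> i\<bar>)" by (rule norm_le_l1)
    also have "\<dots> \<le> (\<Sum>i\<in>Basis. \<Sum>b\<in>B. \<bar>u i b\<bar> * (b \<bullet> b))"
    proof (rule sum_mono)
      fix i :: 'a assume i: "i \<in> Basis"
      have "x \<bullet> i = (\<Sum>b\<in>B. u i b * (x \<bullet> b))"
        by (subst u[rule_format, OF i]) (simp add: inner_sum_right)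
      then have "\<bar>x \<bullet> i\<bar> \<le> (\<Sum>b\<in>B. \<bar>u i b * (x \<bullet> b)\<bar>)" by (simp add: sum_abs)
      also have "\<dots> \<le> (\<Sum>b\<in>B. \<bar>u i b\<bar> * (b \<bullet> b))"
        by (rule sum_mono) (simp add: abs_mult mult_left_mono xb[OF x])
      finally show "\<bar>x \<bullet> i\<bar> \<le> (\<Sum>b\<in>B. \<bar>u i b\<bar> * (b \<bullet> b))" .
    qed
    also have "\<dots> \<le> R" unfolding R_def by simp
    finally show "x \<in> cball 0 R" by simp
  qed
  moreover have "R > 0"
  proof -
    have "0 \<le> (\<Sum>i\<in>Basis. \<Sum>b\<in>B. \<bar>u i b\<bar> * (b \<bullet> b))"
      by (intro sum_nonneg mult_nonneg_nonneg) auto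
    then show ?thesis unfolding R_def by linarith
  qed
  ultimately show ?thesis by blast
qed

lemma V_compact: "compact VC"
  using V_bounded V_closed by (meson bounded_cball bounded_subset compact_eq_bounded_closed)

lemma V_body: "convex_body VC"
proof -
  obtain r where "r > 0" "ball 0 r \<subseteq> VC" using V_ball by blast
  then have "0 \<in> interior VC" by (meson centre_in_ball interior_maximal open_ball subsetD)
  then show ?thesis unfolding convex_body_def using V_compact V_convex by auto
qed

lemma closest: "\<exists>a\<in>L. p - a \<in> VC"
proof -
  obtain a where a: "a \<in> L" "\<And>y. y \<in> L \<Longrightarrow> dist p a \<le> dist p y"
  proof -
    have "L \<noteq> {}" using zero by blast
    then show ?thesis using distance_attains_inf[OF closedL, of p] that by metis
  qed
  have "p - a \<in> VC" unfolding voronoi_cell_def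
  proof safe
    fix c assume "c \<in> L"
    then have "dist p a \<le> dist p (a + c)" using a add by blast
    then show "norm (p - a) \<le> norm (p - a - c)" by (simp add: dist_norm algebra_simps)
  qed
  then show ?thesis using a(1) by blast
qed

lemma length_le_e:
  assumes e: "e > 0" "\<forall>x\<in>L. x \<noteq> 0 \<longrightarrow> e \<le> norm x" and seg: "lattice_segment L a b"
  shows "lattice_length L a b \<le> norm (b - a) / e"
proof (cases "a = b")
  case True then show ?thesis by (simp add: lattice_length_def)
next
  case False
  obtain v t where v: "v \<in> L" "v \<noteq> 0" "b - a = t *\<^sub>R v" using seg unfolding lattice_segment_def by blast
  have t: "t \<noteq> 0" using v False by auto
  define T where "T = {norm v | v. v \<in> L \<and> v \<noteq> 0 \<and> (\<exists>t::real. v = t *\<^sub>R (b - a))}"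
  have "norm v \<in> T" unfolding T_def using v t by (auto intro!: exI[of _ "1/t"])
  then have "T \<noteq> {}" by blast
  moreover have "\<forall>z\<in>T. e \<le> z" unfolding T_def using e by auto
  ultimately have "e \<le> Inf T" by (meson cInf_greatest)
  then have "norm (b - a) / Inf T \<le> norm (b - a) / e"
    using e by (intro divide_left_mono) auto
  then show ?thesis unfolding lattice_length_def T_def .
qed

lemma bdd_lengths:
  assumes "bounded K"
  shows "bdd_above {lattice_length L a b | a b. a \<in> K \<and> b \<in> K \<and> lattice_segment L a b}"
proof -
  obtain e where e: "e > 0" "\<forall>x\<in>L. x \<noteq> 0 \<longrightarrow> e \<le> norm x" using sep by blast
  obtain R where R: "\<forall>x\<in>K. norm x \<le> R" using assms bounded_iff by blast
  show ?thesis unfolding bdd_above_def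
  proof (intro exI allI impI, safe)
    fix a b assume ab: "a \<in> K" "b \<in> K" "lattice_segment L a b"
    have "norm a \<le> R" "norm b \<le> R" using R ab by auto
    then have "norm (b - a) \<le> 2 * R" using norm_triangle_ineq4[of b a] by linarith
    then have "norm (b - a) / e \<le> 2 * R / e" using e by (simp add: divide_right_mono)
    then show "lattice_length L a b \<le> 2 * R / e" using length_le_e[OF e ab(3)] by linarith
  qed
qed

lemma length_V:
  assumes "a \<in> VC" "b \<in> VC" "lattice_segment L a b"
  shows "lattice_length L a b \<le> 1"
proof (cases "a = b")
  case True then show ?thesis by (simp add: lattice_length_def)
next
  case False
  obtain v t where v: "v \<in> L" "v \<noteq> 0" "b - a = t *\<^sub>R v" using assms(3) unfolding lattice_segment_def by blast
  have t: "t \<noteq> 0" using v False by auto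
  define T where "T = {norm v | v. v \<in> L \<and> v \<noteq> 0 \<and> (\<exists>t::real. v = t *\<^sub>R (b - a))}"
  have "norm v \<in> T" unfolding T_def using v t by (auto intro!: exI[of _ "1/t"])
  then have "T \<noteq> {}" by blast
  moreover have "norm (b - a) \<le> z" if "z \<in> T" for z
  proof -
    obtain w s where w: "w \<in> L" "w \<noteq> 0" "w = s *\<^sub>R (b - a)" "z = norm w"
      using \<open>z \<in> T\<close> unfolding T_def by blast
    have s: "s \<noteq> 0" using w by auto
    define \<mu> where "\<mu> = 1 / s"
    have ba: "b - a = \<mu> *\<^sub>R w" unfolding \<mu>_def using w(3) s by simp
    have "- w \<in> L" using w(1) neg by blast
    have 1: "2 * (b \<bullet> w) \<le> w \<bullet> w" using V_le[OF assms(2) w(1)] .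
    have 2: "2 * (a \<bullet> (-w)) \<le> (-w) \<bullet> (-w)" using V_le[OF assms(1) \<open>-w \<in> L\<close>] .
    have 3: "2 * (b \<bullet> (-w)) \<le> (-w) \<bullet> (-w)" using V_le[OF assms(2) \<open>-w \<in> L\<close>] .
    have 4: "2 * (a \<bullet> w) \<le> w \<bullet> w" using V_le[OF assms(1) w(1)] .
    have "(b - a) \<bullet> w = \<mu> * (w \<bullet> w)" using ba by simp
    moreover have "(b - a) \<bullet> w = b \<bullet> w - a \<bullet> w" by (simp add: inner_diff_left)
    ultimately have "\<mu> * (w \<bullet> w) \<le> w \<bullet> w" "- (\<mu> * (w \<bullet> w)) \<le> w \<bullet> w"
      using 1 2 3 4 by auto
    moreover have "w \<bullet> w > 0" using w(2) by simp
    ultimately have "\<mu> * (w \<bullet> w) \<le> 1 * (w \<bullet> w)" "(- \<mu>) * (w \<bullet> w) \<le> 1 * (w \<bullet> w)" "w \<bullet> w > 0"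
      by auto
    then have "\<mu> \<le> 1" "- \<mu> \<le> 1" using mult_le_cancel_right_pos by blast+
    then have "\<bar>\<mu>\<bar> \<le> 1" by linarith
    then have "norm (b - a) \<le> norm w" using ba by (simp add: mult_left_le_one_le)
    then show ?thesis using w(4) by simp
  qed
  ultimately have "norm (b - a) \<le> Inf T" by (meson cInf_greatest)
  then have "norm (b - a) / Inf T \<le> 1"
  proof (cases "Inf T = 0")
    case True then show ?thesis by simp
  next
    case False
    then have "Inf T > 0" using \<open>norm (b - a) \<le> Inf T\<close> norm_ge_zero[of "b - a"] by linarith
    then show ?thesis using \<open>norm (b - a) \<le> Inf T\<close> by simp
  qed
  then show ?thesis unfolding lattice_length_def T_def .
qed

lemma diam_V: "lattice_diameter L VC \<le> 1"
proof -
  obtain v where v: "v \<in> L" "v \<noteq> 0" using nonzero by blast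
  have "lattice_segment L 0 0" unfolding lattice_segment_def using v by (auto intro!: bexI[of _ v] exI[of _ 0])
  then have ne: "{lattice_length L a b | a b. a \<in> VC \<and> b \<in> VC \<and> lattice_segment L a b} \<noteq> {}"
    using zero_V by blast
  show ?thesis unfolding lattice_diameter_def
    by (rule cSup_least[OF ne]) (use length_V in blast)
qed

lemma diam_gt:
  assumes K: "convex_body K" and sub: "VC \<subset> K"
  shows "lattice_diameter L K > 1"
proof -
  obtain e where e: "e > 0" "\<forall>x\<in>L. x \<noteq> 0 \<longrightarrow> e \<le> norm x" using sep by blast
  have Kc: "compact K" "convex K" "interior K \<noteq> {}" using K unfolding convex_body_def by auto
  have "\<not> interior K \<subseteq> VC"
  proof
    assume "interior K \<subseteq> VC"
    then have "closure (interior K) \<subseteq> VC" using V_closed closure_minimal by blast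
    moreover have "closure (interior K) = K"
      using convex_closure_interior[OF Kc(2) Kc(3)] Kc(1) by (simp add: compact_imp_closed)
    ultimately show False using sub by auto
  qed
  then obtain p where p: "p \<in> interior K" "p \<notin> VC" by blast
  obtain \<epsilon> where eps: "\<epsilon> > 0" "ball p \<epsilon> \<subseteq> K" using p(1) mem_interior by blast
  obtain a where a: "a \<in> L" "p - a \<in> VC" using closest by blast
  have a0: "a \<noteq> 0" using a p by auto
  have na: "norm a > 0" using a0 by simp
  define \<tau> where "\<tau> = \<epsilon> / 2"
  define y where "y = p + (\<tau> / norm a) *\<^sub>R a"
  define x where "x = p - a"
  have "dist p y < \<epsilon>" unfolding y_def \<tau>_def dist_norm using eps na by simp
  then have yK: "y \<in> K" using eps by auto
  have xK: "x \<in> K" using a(2) sub unfolding x_def by auto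
  define c where "c = 1 + \<tau> / norm a"
  have c: "c > 1" unfolding c_def \<tau>_def using eps na by simp
  have yx: "y - x = c *\<^sub>R a" unfolding y_def x_def c_def by (simp add: algebra_simps)
  have seg: "lattice_segment L x y" unfolding lattice_segment_def using a a0 yx by blast
  define T where "T = {norm v | v. v \<in> L \<and> v \<noteq> 0 \<and> (\<exists>t::real. v = t *\<^sub>R (y - x))}"
  have "norm a \<in> T" unfolding T_def using a a0 c yx by (auto intro!: exI[of _ "1/c"])
  moreover have "bdd_below T" unfolding T_def by (auto intro!: bdd_belowI[of _ 0])
  ultimately have "Inf T \<le> norm a" by (rule cInf_lower)
  moreover have "e \<le> Inf T"
    using \<open>norm a \<in> T\<close> e by (intro cInf_greatest) (auto simp: T_def)
  ultimately have "c * norm a / Inf T \<ge> c * norm a / norm a"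
    using e na c by (intro divide_left_mono) auto
  moreover have "lattice_length L x y = norm (y - x) / Inf T"
    unfolding lattice_length_def T_def by simp
  moreover have "norm (y - x) = c * norm a" using yx c by simp
  ultimately have len: "lattice_length L x y \<ge> c" using na by simp
  have "lattice_length L x y \<le> lattice_diameter L K"
    unfolding lattice_diameter_def
    by (rule cSup_upper) (use xK yK seg bdd_lengths[OF compact_imp_bounded[OF Kc(1)]] in auto)
  then show ?thesis using len c by linarith
qed

lemma V_complete: "lattice_complete L VC"
  unfolding lattice_complete_def using V_body diam_V diam_gt by fastforce

end

context lat begin

abbreviation "PB \<equiv> polar_body VC"

definition pt :: "'a \<Rightarrow> 'a" where "pt a = (2 / (a \<bullet> a)) *\<^sub>R a"

definition QQ :: "'a set" where "QQ = insert 0 (pt ` (L - {0}))"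

lemma PB_iff: "y \<in> PB \<longleftrightarrow> (\<forall>x\<in>VC. x \<bullet> y \<le> 1)"
  unfolding polar_body_def by simp

lemma inner_pt: "x \<bullet> pt a = 2 * (x \<bullet> a) / (a \<bullet> a)"
  unfolding pt_def by simp

lemma pt_in: assumes "a \<in> L" "a \<noteq> 0" shows "pt a \<in> PB"
  unfolding PB_iff
proof
  fix x assume "x \<in> VC"
  then have "2 * (x \<bullet> a) \<le> a \<bullet> a" using V_le assms(1) by blast
  moreover have "a \<bullet> a > 0" using assms(2) by simp
  ultimately show "x \<bullet> pt a \<le> 1" unfolding inner_pt by simp
qed

lemma pt_neg: "pt (- a) = - pt a" unfolding pt_def by simp

lemma norm_pt: "a \<noteq> 0 \<Longrightarrow> norm (pt a) = 2 / norm a"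
  unfolding pt_def by (simp add: dot_square_norm power2_eq_square)

lemma PB_sym: assumes "y \<in> PB" shows "- y \<in> PB"
  unfolding PB_iff
proof
  fix x assume "x \<in> VC"
  then have "- x \<in> VC" by (rule V_sym)
  then have "(- x) \<bullet> y \<le> 1" using assms PB_iff by blast
  then show "x \<bullet> - y \<le> 1" by simp
qed

lemma zero_PB: "0 \<in> PB" unfolding PB_iff by simp

lemma PB_eq: "PB = (\<Inter>x\<in>VC. {y. x \<bullet> y \<le> 1})"
  unfolding polar_body_def by auto

lemma PB_closed: "closed PB"
  by (subst PB_eq) (intro closed_INT ballI closed_halfspace_le)

lemma PB_convex: "convex PB"
  by (subst PB_eq) (intro convex_INT ballI convex_halfspace_le)

lemma PB_bounded: "\<exists>R>0. PB \<subseteq> cball 0 R"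
proof -
  obtain r where r: "r > 0" "ball 0 r \<subseteq> VC" using V_ball by blast
  have "PB \<subseteq> cball 0 (2 / r)"
  proof
    fix y assume y: "y \<in> PB"
    show "y \<in> cball 0 (2 / r)"
    proof (cases "y = 0")
      case True then show ?thesis using r by simp
    next
      case False
      define x where "x = (r / 2 / norm y) *\<^sub>R y"
      have "norm x = r / 2" unfolding x_def using False r by simp
      then have "x \<in> VC" using r by auto
      then have "x \<bullet> y \<le> 1" using y PB_iff by blast
      moreover have "x \<bullet> y = r / 2 * norm y"
        unfolding x_def using False by (simp add: dot_square_norm power2_eq_square)
      ultimately have "r / 2 * norm y \<le> 1" by simp
      then have "norm y \<le> 2 / r" using r by (simp add: field_simps)
      then show ?thesis by simp
    qed
  qed
  then show ?thesis using r by (intro exI[of _ "2/r"]) auto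
qed

lemma PB_compact: "compact PB"
  using PB_bounded PB_closed by (meson bounded_cball bounded_subset compact_eq_bounded_closed)

lemma PB_body: "convex_body PB"
proof -
  obtain R where R: "R > 0" "VC \<subseteq> cball 0 R" using V_bounded by blast
  have "ball 0 (1 / R) \<subseteq> PB"
  proof
    fix y :: 'a assume "y \<in> ball 0 (1 / R)"
    then have ny: "norm y < 1 / R" by simp
    show "y \<in> PB" unfolding PB_iff
    proof
      fix x assume "x \<in> VC"
      then have nx: "norm x \<le> R" using R by auto
      have "x \<bullet> y \<le> norm x * norm y" by (rule norm_cauchy_schwarz)
      also have "\<dots> \<le> R * (1 / R)" using nx ny R(1) by (intro mult_mono) auto
      also have "\<dots> = 1" using R by simp
      finally show "x \<bullet> y \<le> 1" .
    qed
  qed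
  then have "0 \<in> interior PB" using R by (meson centre_in_ball interior_maximal open_ball subsetD divide_pos_pos zero_less_one)
  then show ?thesis unfolding convex_body_def using PB_compact PB_convex by auto
qed

lemma QQ_sub: "QQ \<subseteq> PB"
  unfolding QQ_def using zero_PB pt_in by auto

lemma QQ_compact: "compact QQ"
proof -
  obtain e where e: "e > 0" "\<forall>x\<in>L. x \<noteq> 0 \<longrightarrow> e \<le> norm x" using sep by blast
  have bnd: "QQ \<subseteq> cball 0 (2 / e)"
  proof
    fix q assume "q \<in> QQ"
    then consider "q = 0" | a where "a \<in> L" "a \<noteq> 0" "q = pt a" unfolding QQ_def by auto
    then show "q \<in> cball 0 (2 / e)"
    proof cases
      case 1 then show ?thesis using e by simp
    next
      case 2
      then have "e \<le> norm a" using e by auto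
      moreover have "0 < norm a" using e(1) \<open>e \<le> norm a\<close> by linarith
      then have "0 < norm a * e" using e(1) by simp
      ultimately have "2 / norm a \<le> 2 / e" using e by (intro divide_left_mono) auto
      then show ?thesis using 2 norm_pt by simp
    qed
  qed
  have cl: "closed QQ" unfolding closed_limpt
  proof (intro allI impI)
    fix x assume lim: "x islimpt QQ"
    show "x \<in> QQ"
    proof (rule ccontr)
      assume xQ: "x \<notin> QQ"
      then have x0: "x \<noteq> 0" unfolding QQ_def by auto
      define \<rho> where "\<rho> = norm x / 2"
      have \<rho>: "\<rho> > 0" unfolding \<rho>_def using x0 by simp
      define F where "F = pt ` (L \<inter> cball 0 (2 / \<rho>))"
      have finF: "finite F" unfolding F_def by (intro finite_imageI finite_bounded) simp
      obtain d where d: "d > 0" "\<forall>y\<in>F. y \<noteq> x \<longrightarrow> d \<le> dist x y"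
        using finite_set_avoid[OF finF, of x] by blast
      obtain y where y: "y \<in> QQ" "y \<noteq> x" "dist y x < min \<rho> d"
        using lim \<rho> d(1) unfolding islimpt_approachable by (meson min_less_iff_conj)
      have "norm x \<le> norm y + dist y x" using norm_triangle_ineq2[of x y]
        by (simp add: dist_norm norm_minus_commute)
      then have ny: "norm y > \<rho>" using y(3) unfolding \<rho>_def by simp
      then have "y \<noteq> 0" using \<rho> by auto
      then obtain a where a: "a \<in> L" "a \<noteq> 0" "y = pt a" using y(1) unfolding QQ_def by auto
      have "2 / norm a > \<rho>" using ny a norm_pt by simp
      then have "norm a < 2 / \<rho>" using \<rho> a(2) by (simp add: field_simps)
      then have "y \<in> F" unfolding F_def using a by auto
      then have "d \<le> dist x y" using d y(2) by blast
      then show False using y(3) by (simp add: dist_commute)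
    qed
  qed
  show ?thesis using bnd cl
    by (meson bounded_cball bounded_subset compact_eq_bounded_closed)
qed

lemma PB_hull: "PB = convex hull QQ"
proof
  show "convex hull QQ \<subseteq> PB" using QQ_sub PB_convex by (rule hull_minimal)
next
  show "PB \<subseteq> convex hull QQ"
  proof
    fix y assume y: "y \<in> PB"
    show "y \<in> convex hull QQ"
    proof (rule ccontr)
      assume ny: "y \<notin> convex hull QQ"
      have "closed (convex hull QQ)" using compact_convex_hull[OF QQ_compact] compact_imp_closed by blast
      then obtain w \<beta> where w: "w \<bullet> y < \<beta>" "\<forall>z\<in>convex hull QQ. \<beta> < w \<bullet> z"
        using separating_hyperplane_closed_point[OF convex_convex_hull _ ny] by blast
      define u where "u = - w"
      define s where "s = - \<beta>"
      have u1: "u \<bullet> z < s" if "z \<in> convex hull QQ" for z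
        using w(2) that unfolding u_def s_def by auto
      have u2: "u \<bullet> y > s" using w(1) unfolding u_def s_def by simp
      have "0 \<in> convex hull QQ" using hull_subset[of QQ convex] unfolding QQ_def by auto
      then have s0: "s > 0" using u1[of 0] by simp
      define v where "v = (1 / s) *\<^sub>R u"
      have "v \<in> VC" unfolding V_iff
      proof
        fix a assume a: "a \<in> L"
        show "2 * (v \<bullet> a) \<le> a \<bullet> a"
        proof (cases "a = 0")
          case True then show ?thesis by simp
        next
          case False
          then have "pt a \<in> convex hull QQ"
            using a hull_subset[of QQ convex] unfolding QQ_def by auto
          then have "u \<bullet> pt a < s" by (rule u1)
          then have "2 * (u \<bullet> a) / (a \<bullet> a) < s" by (simp add: inner_pt)
          moreover have "a \<bullet> a > 0" using False by simp
          ultimately have "2 * (u \<bullet> a) < s * (a \<bullet> a)" by (simp add: divide_less_eq)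
          then have "2 * (u \<bullet> a) / s < a \<bullet> a" using s0 by (simp add: divide_less_eq mult.commute)
          then show ?thesis unfolding v_def using s0 by simp
        qed
      qed
      then have "v \<bullet> y \<le> 1" using y PB_iff by blast
      then have "u \<bullet> y / s \<le> 1" unfolding v_def by simp
      then have "u \<bullet> y \<le> s" using s0 by (simp add: divide_le_eq)
      then show False using u2 by simp
    qed
  qed
qed

end

context lat begin

lemma pt_ne0: "a \<noteq> 0 \<Longrightarrow> pt a \<noteq> 0" unfolding pt_def by simp

lemma ext_form:
  assumes ext: "e extreme_point_of PB"
  shows "\<exists>a\<in>L. a \<noteq> 0 \<and> e = pt a \<and> (\<forall>b\<in>L. b \<noteq> 0 \<longrightarrow> b \<noteq> a \<longrightarrow> a \<bullet> b < b \<bullet> b)"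
proof -
  have ePB: "e \<in> PB" using ext extreme_point_of_def by blast
  have noseg: "e \<notin> open_segment p q" if "p \<in> PB" "q \<in> PB" for p q
    using ext that unfolding extreme_point_of_def by blast
  have "e \<in> QQ" using extreme_point_of_convex_hull[of e QQ] ext PB_hull by simp
  moreover have e0: "e \<noteq> 0"
  proof
    assume "e = 0"
    obtain a0 where a0: "a0 \<in> L" "a0 \<noteq> 0" using nonzero by blast
    have p: "pt a0 \<in> PB" "- pt a0 \<in> PB" using pt_in[OF a0] PB_sym by auto
    have "pt a0 \<noteq> - pt a0"
    proof
      assume h: "pt a0 = - pt a0"
      have "(2::real) *\<^sub>R pt a0 = pt a0 + pt a0" by (simp add: scaleR_2)
      also have "\<dots> = pt a0 + - pt a0" using h by simp
      also have "\<dots> = 0" by simp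
      finally show False using pt_ne0[OF a0(2)] by simp
    qed
    then have "midpoint (pt a0) (- pt a0) \<in> open_segment (pt a0) (- pt a0)" by simp
    moreover have "midpoint (pt a0) (- pt a0) = 0" by (simp add: midpoint_def)
    ultimately show False using noseg[OF p] \<open>e = 0\<close> by simp
  qed
  ultimately obtain a where a: "a \<in> L" "a \<noteq> 0" "e = pt a" unfolding QQ_def by auto
  have strict: "a \<bullet> b < b \<bullet> b" if b: "b \<in> L" "b \<noteq> 0" "b \<noteq> a" for b
  proof (rule ccontr)
    assume "\<not> a \<bullet> b < b \<bullet> b"
    then have ab: "b \<bullet> b \<le> a \<bullet> b" by simp
    define c where "c = a - b"
    have cL: "c \<in> L" unfolding c_def using a(1) b(1) diff by blast
    have c0: "c \<noteq> 0" unfolding c_def using b(3) by simp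
    have acb: "a = b + c" unfolding c_def by simp
    define bb where "bb = b \<bullet> b"
    define cc where "cc = c \<bullet> c"
    define aa where "aa = a \<bullet> a"
    define bc where "bc = b \<bullet> c"
    have bbp: "bb > 0" unfolding bb_def using b(2) by simp
    have ccp: "cc > 0" unfolding cc_def using c0 by simp
    have aap: "aa > 0" unfolding aa_def using a(2) by simp
    have bc0: "bc \<ge> 0" unfolding bc_def c_def using ab by (simp add: inner_diff_right inner_commute)
    have aasum: "aa = bb + cc + 2 * bc" unfolding aa_def bb_def cc_def bc_def acb
      by (simp add: inner_add_left inner_add_right inner_commute)
    define lam where "lam = bb / aa"
    define \<mu> where "\<mu> = cc / aa"
    have l0: "lam > 0" "\<mu> > 0" unfolding lam_def \<mu>_def using bbp ccp aap by auto
    have lb: "lam *\<^sub>R pt b = (2 / aa) *\<^sub>R b" unfolding lam_def pt_def bb_def[symmetric]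
      using bbp aap by simp
    have lc: "\<mu> *\<^sub>R pt c = (2 / aa) *\<^sub>R c" unfolding \<mu>_def pt_def cc_def[symmetric]
      using ccp aap by simp
    have ecomb: "e = lam *\<^sub>R pt b + \<mu> *\<^sub>R pt c"
    proof -
      have "e = (2 / aa) *\<^sub>R a" unfolding a(3) pt_def aa_def by simp
      also have "\<dots> = (2 / aa) *\<^sub>R b + (2 / aa) *\<^sub>R c" by (subst acb) (simp add: scaleR_add_right)
      also have "\<dots> = lam *\<^sub>R pt b + \<mu> *\<^sub>R pt c" using lb lc by simp
      finally show ?thesis .
    qed
    have pbc: "pt b \<in> PB" "pt c \<in> PB" using pt_in b cL c0 by auto
    have lsum: "lam + \<mu> = (bb + cc) / aa" unfolding lam_def \<mu>_def by (simp add: add_divide_distrib)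
    show False
    proof (cases "bc = 0")
      case True
      then have s1: "lam + \<mu> = 1" using lsum aasum aap by simp
      have "pt b \<noteq> pt c"
      proof
        assume eq: "pt b = pt c"
        have "b \<bullet> pt b = 2" using bbp unfolding inner_pt bb_def by simp
        moreover have "b \<bullet> pt c = 0" using True unfolding inner_pt bc_def by simp
        ultimately show False using eq by simp
      qed
      moreover have "e = (1 - \<mu>) *\<^sub>R pt b + \<mu> *\<^sub>R pt c"
      proof -
        have "1 - \<mu> = lam" using s1 by simp
        then show ?thesis using ecomb by simp
      qed
      moreover have "\<mu> < 1" using s1 l0 by simp
      ultimately have "e \<in> open_segment (pt b) (pt c)" using l0 unfolding in_segment by blast
      then show False using noseg[OF pbc] by simp
    next
      case False
      then have bcp: "bc > 0" using bc0 by simp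
      define s where "s = lam + \<mu>"
      have s: "0 < s" "s < 1" unfolding s_def using l0 lsum aasum aap bcp by (auto simp: divide_less_eq)
      define m where "m = (lam / s) *\<^sub>R pt b + (\<mu> / s) *\<^sub>R pt c"
      have mPB: "m \<in> PB" unfolding m_def
        using convexD[OF PB_convex pbc, of "lam / s" "\<mu> / s"] l0 s
        by (simp add: s_def add_divide_distrib[symmetric])
      have em: "e = s *\<^sub>R m" unfolding m_def ecomb using s by (simp add: scaleR_add_right)
      have m0: "m \<noteq> 0" using em e0 by auto
      have "e = (1 - s) *\<^sub>R 0 + s *\<^sub>R m" using em by simp
      then have "e \<in> open_segment 0 m" using s m0 unfolding in_segment(2) by (metis m0)
      then show False using noseg[OF zero_PB mPB] by simp
    qed
  qed
  show ?thesis using a strict by blast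
qed

end

lemma finite_gap:
  fixes f :: "'b \<Rightarrow> real"
  assumes "finite F" "\<forall>b\<in>F. 0 < f b"
  shows "\<exists>\<delta>>0. \<forall>b\<in>F. \<delta> \<le> f b"
proof -
  define \<delta> where "\<delta> = Min (insert 1 (f ` F))"
  have fin: "finite (insert 1 (f ` F))" using assms(1) by simp
  have "\<delta> \<in> insert 1 (f ` F)" unfolding \<delta>_def by (rule Min_in[OF fin]) simp
  then have "\<delta> > 0" using assms(2) by auto
  moreover have "\<forall>b\<in>F. \<delta> \<le> f b" unfolding \<delta>_def using Min_le[OF fin] by simp
  ultimately show ?thesis by blast
qed

context lat begin

definition strict_pt :: "'a \<Rightarrow> bool" where
  "strict_pt a \<longleftrightarrow> a \<in> L \<and> a \<noteq> 0 \<and> (\<forall>b\<in>L. b \<noteq> 0 \<longrightarrow> b \<noteq> a \<longrightarrow> a \<bullet> b < b \<bullet> b)"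

lemma half_in: assumes "strict_pt a" shows "(1/2) *\<^sub>R a \<in> VC"
  unfolding V_iff
proof
  fix b assume b: "b \<in> L"
  have "a \<bullet> b \<le> b \<bullet> b"
  proof (cases "b = 0 \<or> b = a")
    case True then show ?thesis by auto
  next
    case False then show ?thesis using assms b unfolding strict_pt_def by force
  qed
  then show "2 * ((1/2) *\<^sub>R a \<bullet> b) \<le> b \<bullet> b" by simp
qed

lemma PB_le:
  assumes "strict_pt a" "x \<in> PB"
  shows "x \<bullet> a \<le> 2" "- (x \<bullet> a) \<le> 2"
proof -
  have h: "(1/2) *\<^sub>R a \<in> VC" by (rule half_in[OF assms(1)])
  then have "((1/2) *\<^sub>R a) \<bullet> x \<le> 1" using assms(2) PB_iff by blast
  then show "x \<bullet> a \<le> 2" by (simp add: inner_commute)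
  have "- ((1/2) *\<^sub>R a) \<in> VC" using V_sym[OF h] .
  then have "(- ((1/2) *\<^sub>R a)) \<bullet> x \<le> 1" using assms(2) PB_iff by blast
  then show "- (x \<bullet> a) \<le> 2" by (simp add: inner_commute)
qed

lemma unique:
  assumes st: "strict_pt a" and x: "x \<in> PB" "x \<bullet> a = 2"
  shows "x = pt a"
proof -
  have aL: "a \<in> L" and a0: "a \<noteq> 0" and str: "\<And>b. b \<in> L \<Longrightarrow> b \<noteq> 0 \<Longrightarrow> b \<noteq> a \<Longrightarrow> a \<bullet> b < b \<bullet> b"
    using st unfolding strict_pt_def by auto
  define M where "M = 2 * norm a + 1"
  have M0: "M > 0" unfolding M_def using norm_ge_zero[of a] by linarith
  have "norm a + M / 2 \<le> M" unfolding M_def using norm_ge_zero[of a] by (simp add: field_simps)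
  note M = M0 this
  define F where "F = (L \<inter> cball 0 M) - {0, a}"
  have finF: "finite F" unfolding F_def using finite_bounded[of "cball 0 M"] by auto
  obtain \<delta> where \<delta>: "\<delta> > 0" "\<forall>b\<in>F. \<delta> \<le> b \<bullet> b - a \<bullet> b"
    using finite_gap[OF finF, of "\<lambda>b. b \<bullet> b - a \<bullet> b"] str unfolding F_def by auto
  define \<eta> where "\<eta> = min (\<delta> / (2 * M)) (M / 4)"
  have \<eta>: "\<eta> > 0" "2 * \<eta> * M \<le> \<delta>" "\<eta> \<le> M / 4" unfolding \<eta>_def using \<delta> M
    by (auto simp: min_def field_simps)
  have zV: "(1/2) *\<^sub>R a + w \<in> VC" if w: "w \<bullet> a = 0" "norm w \<le> \<eta>" for w
    unfolding V_iff
  proof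
    fix b assume b: "b \<in> L"
    have wb: "2 * (w \<bullet> b) \<le> 2 * \<eta> * norm b"
    proof -
      have "w \<bullet> b \<le> norm w * norm b" by (rule norm_cauchy_schwarz)
      also have "\<dots> \<le> \<eta> * norm b" using w(2) by (intro mult_right_mono) auto
      finally show ?thesis by simp
    qed
    have goal: "a \<bullet> b + 2 * (w \<bullet> b) \<le> b \<bullet> b"
    proof (cases "b = 0 \<or> b = a")
      case True then show ?thesis using w(1) by auto
    next
      case False
      show ?thesis
      proof (cases "norm b \<le> M")
        case True
        then have "b \<in> F" unfolding F_def using b False by auto
        then have "\<delta> \<le> b \<bullet> b - a \<bullet> b" using \<delta> by blast
        moreover have "2 * \<eta> * norm b \<le> 2 * \<eta> * M" using True \<eta> by (intro mult_left_mono) auto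
        ultimately show ?thesis using wb \<eta>(2) by linarith
      next
        case False
        have ab: "a \<bullet> b \<le> norm a * norm b" by (rule norm_cauchy_schwarz)
        have "2 * \<eta> * norm b \<le> (M / 2) * norm b" using \<eta>(3) by (intro mult_right_mono) auto
        then have "a \<bullet> b + 2 * (w \<bullet> b) \<le> (norm a + M / 2) * norm b"
          using ab wb by (simp add: algebra_simps)
        also have "\<dots> \<le> M * norm b" using M(2) by (intro mult_right_mono) auto
        also have "\<dots> \<le> norm b * norm b" using False by (intro mult_right_mono) auto
        also have "\<dots> = b \<bullet> b" by (simp add: dot_square_norm power2_eq_square)
        finally show ?thesis .
      qed
    qed
    then show "2 * (((1/2) *\<^sub>R a + w) \<bullet> b) \<le> b \<bullet> b" by (simp add: inner_add_left)
  qed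
  have xw: "x \<bullet> w \<le> 0" if "w \<bullet> a = 0" "norm w \<le> \<eta>" for w
  proof -
    have "((1/2) *\<^sub>R a + w) \<bullet> x \<le> 1" using zV[OF that] x(1) PB_iff by blast
    then have "(1/2) * (a \<bullet> x) + w \<bullet> x \<le> 1" by (simp add: inner_add_left)
    moreover have "a \<bullet> x = 2" using x(2) by (simp add: inner_commute)
    ultimately have "w \<bullet> x \<le> 0" by simp
    then show ?thesis by (simp add: inner_commute)
  qed
  define w0 where "w0 = x - pt a"
  have "pt a \<bullet> a = 2" using a0 by (simp add: inner_pt inner_commute)
  then have w0a: "w0 \<bullet> a = 0" unfolding w0_def using x(2) by (simp add: inner_diff_left)
  have "w0 = 0"
  proof (rule ccontr)
    assume w00: "w0 \<noteq> 0"
    define w where "w = (\<eta> / norm w0) *\<^sub>R w0"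
    have wa: "w \<bullet> a = 0" "(- w) \<bullet> a = 0" unfolding w_def using w0a by auto
    have nw: "norm w \<le> \<eta>" "norm (- w) \<le> \<eta>" unfolding w_def using w00 \<eta>(1) by auto
    have "x \<bullet> w \<le> 0" "x \<bullet> (- w) \<le> 0" using xw wa nw by blast+
    then have "x \<bullet> w = 0" by simp
    then have "(\<eta> / norm w0) * (x \<bullet> w0) = 0" unfolding w_def by simp
    then have xw0: "x \<bullet> w0 = 0" using \<eta>(1) w00 by simp
    have "pt a \<bullet> w0 = 0" unfolding pt_def using w0a by (simp add: inner_commute)
    then have "w0 \<bullet> w0 = 0" using xw0 unfolding w0_def
      by (simp add: inner_diff_left inner_diff_right inner_commute)
    then show False using w00 by simp
  qed
  then show ?thesis unfolding w0_def by simp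
qed

lemma sup_bdd:
  assumes "bounded K"
  shows "bdd_above ((\<lambda>p. y \<bullet> (fst p - snd p)) ` (K \<times> K))"
proof -
  obtain R where R: "\<forall>x\<in>K. norm x \<le> R" using assms bounded_iff by blast
  show ?thesis unfolding bdd_above_def
  proof (intro exI ballI)
    fix z assume "z \<in> (\<lambda>p. y \<bullet> (fst p - snd p)) ` (K \<times> K)"
    then obtain p q where pq: "p \<in> K" "q \<in> K" "z = y \<bullet> (p - q)" by auto
    have "norm p \<le> R" "norm q \<le> R" using R pq by auto
    then have nd: "norm (p - q) \<le> 2 * R" using norm_triangle_ineq4[of p q] by linarith
    have "z \<le> norm y * norm (p - q)" using pq(3) norm_cauchy_schwarz by simp
    also have "\<dots> \<le> norm y * (2 * R)" using nd by (intro mult_left_mono) auto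
    finally show "z \<le> norm y * (2 * R)" .
  qed
qed

lemma width_PB: "4 \<le> lattice_width (dual_lattice L) PB"
  unfolding lattice_width_def dual_dual
proof (rule cINF_greatest)
  show "L - {0} \<noteq> {}" using nonzero by blast
next
  fix y assume y: "y \<in> L - {0}"
  have mem: "(pt y, - pt y) \<in> PB \<times> PB" using pt_in[of y] PB_sym y by auto
  have "y \<bullet> (pt y - - pt y) = 4"
  proof -
    have "y \<bullet> pt y = 2" using y by (simp add: inner_pt)
    then show ?thesis by (simp add: inner_diff_right inner_add_right)
  qed
  then show "4 \<le> (SUP p\<in>PB \<times> PB. y \<bullet> (fst p - snd p))"
    using cSUP_upper2[OF sup_bdd[OF compact_imp_bounded[OF PB_compact]] mem] by simp
qed

lemma width_K:
  assumes K: "convex_body K" "K \<subseteq> PB" and st: "strict_pt a" and notin: "pt a \<notin> K"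
  shows "lattice_width (dual_lattice L) K < 4"
proof -
  have Kc: "compact K" and Kne: "K \<noteq> {}" using K(1) unfolding convex_body_def by auto
  have aL: "a \<in> L - {0}" using st unfolding strict_pt_def by auto
  define f where "f = (\<lambda>p. a \<bullet> (fst p - snd p))"
  have cont: "continuous_on (K \<times> K) f" unfolding f_def by (intro continuous_intros)
  obtain ps where ps: "ps \<in> K \<times> K" "\<forall>q\<in>K \<times> K. f q \<le> f ps"
    using continuous_attains_sup[OF compact_Times[OF Kc Kc] _ cont] Kne by blast
  have supeq: "(SUP p\<in>K \<times> K. f p) = f ps"
    by (rule cSup_eq_maximum) (use ps in auto)
  obtain p q where pq: "ps = (p, q)" "p \<in> K" "q \<in> K" using ps(1) by auto
  have pPB: "p \<in> PB" "q \<in> PB" using pq K(2) by auto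
  have "p \<bullet> a \<le> 2" using PB_le[OF st pPB(1)] by simp
  moreover have "p \<bullet> a \<noteq> 2"
  proof
    assume "p \<bullet> a = 2"
    then have "p = pt a" using unique[OF st pPB(1)] by simp
    then show False using notin pq by simp
  qed
  ultimately have p2: "p \<bullet> a < 2" by simp
  have q2: "- (q \<bullet> a) \<le> 2" using PB_le[OF st pPB(2)] by simp
  have "f ps < 4" unfolding f_def pq(1) using p2 q2 by (simp add: inner_diff_right inner_commute)
  then have sup4: "(SUP p\<in>K \<times> K. a \<bullet> (fst p - snd p)) < 4" using supeq unfolding f_def by simp
  have bdd: "bdd_below ((\<lambda>y. SUP p\<in>K \<times> K. y \<bullet> (fst p - snd p)) ` (L - {0}))"
  proof (rule bdd_belowI2[of _ 0])
    fix y
    obtain k where "k \<in> K" using Kne by blast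
    then have "(k, k) \<in> K \<times> K" by simp
    then show "0 \<le> (SUP p\<in>K \<times> K. y \<bullet> (fst p - snd p))"
      using cSUP_upper2[OF sup_bdd[OF compact_imp_bounded[OF Kc]], of "(k,k)" 0 y] by simp
  qed
  have "lattice_width (dual_lattice L) K \<le> (SUP p\<in>K \<times> K. a \<bullet> (fst p - snd p))"
    unfolding lattice_width_def dual_dual by (rule cINF_lower[OF bdd aL])
  then show ?thesis using sup4 by linarith
qed

lemma PB_reduced: "lattice_reduced (dual_lattice L) PB"
  unfolding lattice_reduced_def
proof (intro conjI notI)
  show "convex_body PB" by (rule PB_body)
next
  assume "\<exists>K'. convex_body K' \<and> K' \<subset> PB \<and> lattice_width (dual_lattice L) K' = lattice_width (dual_lattice L) PB"
  then obtain K where K: "convex_body K" "K \<subset> PB"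
    "lattice_width (dual_lattice L) K = lattice_width (dual_lattice L) PB" by blast
  have Kconv: "convex K" using K(1) unfolding convex_body_def by auto
  have "\<not> {x. x extreme_point_of PB} \<subseteq> K"
  proof
    assume "{x. x extreme_point_of PB} \<subseteq> K"
    then have "convex hull {x. x extreme_point_of PB} \<subseteq> K" using Kconv by (rule hull_minimal)
    then have "PB \<subseteq> K" using Krein_Milman_Minkowski[OF PB_compact PB_convex] by simp
    then show False using K(2) by auto
  qed
  then obtain e where e: "e extreme_point_of PB" "e \<notin> K" by blast
  obtain a where a: "a \<in> L" "a \<noteq> 0" "e = pt a" "\<forall>b\<in>L. b \<noteq> 0 \<longrightarrow> b \<noteq> a \<longrightarrow> a \<bullet> b < b \<bullet> b"
    using ext_form[OF e(1)] by blast
  have st: "strict_pt a" unfolding strict_pt_def using a by auto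
  have "lattice_width (dual_lattice L) K < 4"
    using width_K[OF K(1) _ st] K(2) a(3) e(2) by auto
  then show False using width_PB K(3) by linarith
qed

end

theorem proposition3p11:
  fixes L :: "'a::euclidean_space set"
  assumes "is_lattice L"
  shows "lattice_complete L (voronoi_cell L)
       \<and> lattice_reduced (dual_lattice L) (polar_body (voronoi_cell L))"
proof -
  interpret lat L by unfold_locales (rule assms)
  show ?thesis using V_complete PB_reduced by blast
qed


end
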